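(* Let $D$ be an integral domain. Then, the closure of the set of semilocal Pr\"ufer overrings of $D$ in the constructible topology of the space of all overrings of $D$ is the set of integrally closed overrings of $D$.
   Context: Let $D$ be an integral domain with quotient field $K$. The set of all overrings of $D$ (rings $R$ with $D\subseteq R\subseteq K$) carries the Zariski topology, whose basic open sets are $\{R \mid F\subseteq R\}$ for $F$ ranging among finite subsets of $K$; it is a spectral space. The constructible topology on a spectral space is the coarsest topology for which all open and quasi-compact subsets are clopen. *)

theory Defs
  imports "HOL-Analysis.Analysis" "HOL-Computational_Algebra.Polynomial"
begin

text \<open>The ambient field K is a type 'a of class field. A subring of K is a subset
containing 0, 1 and closed under addition, negation and multiplication.\<close>

definition is_subring :: "'a::field set \<Rightarrow> bool" where
  "is_subring R \<longleftrightarrow> 0 \<in> R \<and> 1 \<in> R \<and>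
     (\<forall>x\<in>R. \<forall>y\<in>R. x + y \<in> R \<and> x * y \<in> R) \<and> (\<forall>x\<in>R. - x \<in> R)"

definition is_quotient_field_of :: "'a::field set \<Rightarrow> bool" where
  "is_quotient_field_of D \<longleftrightarrow> (\<forall>x::'a. \<exists>a\<in>D. \<exists>b\<in>D. b \<noteq> 0 \<and> x = a / b)"

definition overrings :: "'a::field set \<Rightarrow> 'a set set" where
  "overrings D = {R. is_subring R \<and> D \<subseteq> R}"

definition is_ideal_of :: "'a::field set \<Rightarrow> 'a set \<Rightarrow> bool" where
  "is_ideal_of R I \<longleftrightarrow> I \<subseteq> R \<and> 0 \<in> I \<and> (\<forall>x\<in>I. \<forall>y\<in>I. x + y \<in> I) \<and>
     (\<forall>r\<in>R. \<forall>x\<in>I. r * x \<in> I)"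

definition is_maximal_ideal_of :: "'a::field set \<Rightarrow> 'a set \<Rightarrow> bool" where
  "is_maximal_ideal_of R M \<longleftrightarrow> is_ideal_of R M \<and> M \<noteq> R \<and>
     (\<forall>J. is_ideal_of R J \<and> M \<subseteq> J \<and> J \<noteq> R \<longrightarrow> J = M)"

definition localization_at :: "'a::field set \<Rightarrow> 'a set \<Rightarrow> 'a set" where
  "localization_at R M = {a / s | a s. a \<in> R \<and> s \<in> R \<and> s \<notin> M}"

definition is_valuation_ring :: "'a::field set \<Rightarrow> bool" where
  "is_valuation_ring V \<longleftrightarrow> is_subring V \<and> (\<forall>x. x \<noteq> 0 \<longrightarrow> x \<in> V \<or> inverse x \<in> V)"

definition is_pruefer :: "'a::field set \<Rightarrow> bool" where
  "is_pruefer R \<longleftrightarrow> is_subring R \<and>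
     (\<forall>M. is_maximal_ideal_of R M \<longrightarrow> is_valuation_ring (localization_at R M))"

definition is_semilocal :: "'a::field set \<Rightarrow> bool" where
  "is_semilocal R \<longleftrightarrow> finite {M. is_maximal_ideal_of R M}"

definition is_integrally_closed :: "'a::field set \<Rightarrow> bool" where
  "is_integrally_closed R \<longleftrightarrow>
     (\<forall>p::'a poly. \<forall>x. lead_coeff p = 1 \<and> (\<forall>i. coeff p i \<in> R) \<and> poly p x = 0 \<longrightarrow> x \<in> R)"

definition zariski_overrings :: "'a::field set \<Rightarrow> 'a set topology" where
  "zariski_overrings D =
     topology_generated_by {{R \<in> overrings D. F \<subseteq> R} | F. finite F}"

text \<open>Constructible topology: coarsest topology on the space in which every open and
quasi-compact set of the Zariski topology is clopen, i.e. generated by these sets and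
their complements.\<close>

definition constructible_overrings :: "'a::field set \<Rightarrow> 'a set topology" where
  "constructible_overrings D =
     topology_generated_by
       ({U. openin (zariski_overrings D) U \<and> compactin (zariski_overrings D) U} \<union>
        {topspace (zariski_overrings D) - U | U.
            openin (zariski_overrings D) U \<and> compactin (zariski_overrings D) U})"

end

theory Submission
  imports Defs
begin


lemma subringD:
  assumes "is_subring R"
  shows "0 \<in> R" "1 \<in> R" "x \<in> R \<Longrightarrow> y \<in> R \<Longrightarrow> x + y \<in> R"
    "x \<in> R \<Longrightarrow> y \<in> R \<Longrightarrow> x * y \<in> R" "x \<in> R \<Longrightarrow> - x \<in> R"
  using assms unfolding is_subring_def by auto

lemma subring_diff: "is_subring R \<Longrightarrow> x \<in> R \<Longrightarrow> y \<in> R \<Longrightarrow> x - y \<in> R"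
  by (metis diff_conv_add_uminus subringD(3,5))

lemma subring_sum: "is_subring R \<Longrightarrow> (\<And>i. i \<in> A \<Longrightarrow> f i \<in> R) \<Longrightarrow> sum f A \<in> R"
  by (induction A rule: infinite_finite_induct) (auto intro: subringD)

lemma subring_prod: "is_subring R \<Longrightarrow> (\<And>i. i \<in> A \<Longrightarrow> f i \<in> R) \<Longrightarrow> prod f A \<in> R"
  by (induction A rule: infinite_finite_induct) (auto intro: subringD)

lemma subring_power: "is_subring R \<Longrightarrow> x \<in> R \<Longrightarrow> x ^ n \<in> R"
  by (induction n) (auto intro: subringD)

lemma subring_of_nat: "is_subring R \<Longrightarrow> of_nat n \<in> R"
  by (induction n) (auto intro: subringD)

lemma poly_in_subring:
  assumes "is_subring R" "\<And>i. coeff p i \<in> R" "x \<in> R"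
  shows "poly p x \<in> R"
  using assms(2)
proof (induction p rule: pCons_induct)
  case 0 then show ?case using assms(1) by (simp add: subringD)
next
  case (pCons a p)
  have "coeff p i \<in> R" for i using pCons.prems[of "Suc i"] by simp
  then have "poly p x \<in> R" using pCons.IH by blast
  moreover have "a \<in> R" using pCons.prems[of 0] by simp
  ultimately show ?case using assms by (simp add: subringD)
qed

definition adjoin :: "'a::field set \<Rightarrow> 'a \<Rightarrow> 'a set" where
  "adjoin B y = {poly p y | p. \<forall>i. coeff p i \<in> B}"

lemma adjoin_subring:
  assumes B: "is_subring B"
  shows "is_subring (adjoin B y)" "B \<subseteq> adjoin B y" "y \<in> adjoin B y"
proof -
  have c1: "\<forall>i. coeff (1::'a poly) i \<in> B" using subringD[OF B] by (auto simp: coeff_1)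
  show "is_subring (adjoin B y)"
    unfolding is_subring_def adjoin_def
  proof (intro conjI ballI)
    show "0 \<in> {poly p y |p. \<forall>i. coeff p i \<in> B}"
      by (rule CollectI, rule exI[of _ 0]) (simp add: subringD[OF B])
    show "1 \<in> {poly p y |p. \<forall>i. coeff p i \<in> B}"
      by (rule CollectI, rule exI[of _ 1]) (use c1 in simp)
  next
    fix a b assume "a \<in> {poly p y |p. \<forall>i. coeff p i \<in> B}" "b \<in> {poly p y |p. \<forall>i. coeff p i \<in> B}"
    then obtain p q where p: "a = poly p y" "\<forall>i. coeff p i \<in> B" and q: "b = poly q y" "\<forall>i. coeff q i \<in> B"
      by auto
    show "a + b \<in> {poly p y |p. \<forall>i. coeff p i \<in> B}"
      using p q by (intro CollectI exI[of _ "p + q"]) (auto simp: subringD[OF B])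
    have "\<forall>i. coeff (p * q) i \<in> B"
      using p q by (auto simp: coeff_mult intro!: subring_sum[OF B] subringD[OF B])
    then show "a * b \<in> {poly p y |p. \<forall>i. coeff p i \<in> B}"
      using p q by (intro CollectI exI[of _ "p * q"]) auto
  next
    fix a assume "a \<in> {poly p y |p. \<forall>i. coeff p i \<in> B}"
    then obtain p where p: "a = poly p y" "\<forall>i. coeff p i \<in> B" by auto
    show "- a \<in> {poly p y |p. \<forall>i. coeff p i \<in> B}"
      using p by (intro CollectI exI[of _ "- p"]) (auto simp: subringD[OF B])
  qed
  show "B \<subseteq> adjoin B y"
  proof
    fix b assume "b \<in> B"
    then have "\<forall>i. coeff [:b:] i \<in> B" using B by (auto simp: coeff_pCons subringD split: nat.split)
    then show "b \<in> adjoin B y" unfolding adjoin_def by (intro CollectI exI[of _ "[:b:]"]) auto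
  qed
  have "\<forall>i. coeff [:0,1:] i \<in> B" using B by (auto simp: coeff_pCons subringD split: nat.split)
  then show "y \<in> adjoin B y" unfolding adjoin_def by (intro CollectI exI[of _ "[:0,1:]"]) auto
qed



lemma not_in_adjoin_inverse:
  assumes R: "is_subring R" and ic: "is_integrally_closed R" and g: "g \<notin> R"
  shows "g \<notin> adjoin R (inverse g)"
proof
  assume "g \<in> adjoin R (inverse g)"
  then obtain p where p: "g = poly p (inverse g)" "\<forall>i. coeff p i \<in> R"
    unfolding adjoin_def by auto
  have g0: "g \<noteq> 0" using g subringD(1)[OF R] by auto
  define n where "n = degree p"
  define q where "q = monom 1 (Suc n) - reflect_poly p"
  have "poly q g = g ^ Suc n - g ^ n * poly p (inverse g)"
    unfolding q_def n_def by (simp add: poly_monom poly_reflect_poly_nz[OF g0])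
  also have "\<dots> = 0" using p(1) by simp
  finally have q0: "poly q g = 0" .
  have dr: "degree (reflect_poly p) \<le> n" unfolding n_def by (rule degree_reflect_poly_le)
  have cq: "coeff q i = (if i = Suc n then 1 else 0) - coeff (reflect_poly p) i" for i
    unfolding q_def by simp
  have "coeff q (Suc n) = 1" using dr by (simp add: cq coeff_eq_0)
  moreover have "degree q \<le> Suc n"
    unfolding q_def by (rule degree_diff_le) (use dr in \<open>auto simp: degree_monom_le intro: le_trans\<close>)
  ultimately have "degree q = Suc n" by (metis le_antisym le_degree zero_neq_one)
  then have lc: "lead_coeff q = 1" using \<open>coeff q (Suc n) = 1\<close> by simp
  have "coeff q i \<in> R" for i
    using p(2) by (auto simp: cq coeff_reflect_poly intro!: subring_diff[OF R] subringD[OF R])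
  then have "g \<in> R" using ic lc q0 unfolding is_integrally_closed_def by blast
  with g show False by contradiction
qed

lemma subring_chain_Union:
  assumes "C \<noteq> {}" "\<And>B. B \<in> C \<Longrightarrow> is_subring B" "\<And>X Y. X \<in> C \<Longrightarrow> Y \<in> C \<Longrightarrow> X \<subseteq> Y \<or> Y \<subseteq> X"
  shows "is_subring (\<Union>C)"
  unfolding is_subring_def
proof (intro conjI ballI)
  obtain B where B: "B \<in> C" using assms(1) by auto
  show "0 \<in> \<Union>C" "1 \<in> \<Union>C" using B subringD(1,2)[OF assms(2)[OF B]] by auto
next
  fix x y assume "x \<in> \<Union>C" "y \<in> \<Union>C"
  then obtain X Y where XY: "X \<in> C" "Y \<in> C" "x \<in> X" "y \<in> Y" by auto
  show "x + y \<in> \<Union>C" "x * y \<in> \<Union>C"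
    using assms(3)[OF XY(1,2)] XY assms(2)[OF XY(1)] assms(2)[OF XY(2)]
    by (auto intro!: subringD)
next
  fix x assume "x \<in> \<Union>C"
  then show "- x \<in> \<Union>C" using assms(2) by (auto intro: subringD)
qed

lemma ideal_like_sum:
  assumes "0 \<in> J" "\<And>a b. a \<in> J \<Longrightarrow> b \<in> J \<Longrightarrow> a + b \<in> J" "\<And>i. i \<in> A \<Longrightarrow> f i \<in> J"
  shows "sum f A \<in> J"
  using assms(3) by (induction A rule: infinite_finite_induct) (auto simp: assms(1,2))

lemma degree_reduce:
  fixes y :: "'a::field"
  assumes V: "is_subring V"
    and J0: "0 \<in> J" and Jadd: "\<And>a b. a \<in> J \<Longrightarrow> b \<in> J \<Longrightarrow> a + b \<in> J"
    and Jneg: "\<And>a. a \<in> J \<Longrightarrow> - a \<in> J"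
    and Jmul: "\<And>a b. a \<in> J \<Longrightarrow> b \<in> V \<Longrightarrow> a * b \<in> J"
    and JV: "J \<subseteq> V"
    and Junit: "\<And>a. a \<in> J \<Longrightarrow> 1 - a \<noteq> 0 \<and> inverse (1 - a) \<in> V"
    and J1: "1 \<notin> J"
    and y0: "y \<noteq> 0"
    and p: "\<forall>i. coeff p i \<in> J" "poly p y = 1"
    and q: "\<forall>i. coeff q i \<in> J" "poly q (inverse y) = 1"
    and dq: "degree q \<le> degree p"
  shows "\<exists>p'. (\<forall>i. coeff p' i \<in> J) \<and> poly p' y = 1 \<and> degree p' < degree p"
proof -
  define n where "n = degree p"
  define k where "k = degree q"
  define z where "z = inverse y"
  have n0: "n \<noteq> 0"
  proof
    assume "n = 0"
    then have "poly p y = coeff p 0" unfolding n_def by (simp add: poly_altdef)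
    then show False using p J1 by metis
  qed
  define d0 where "d0 = coeff q 0"
  define u where "u = inverse (1 - d0)"
  have d0J: "d0 \<in> J" using q(1) d0_def by auto
  have uV: "u \<in> V" and d1: "1 - d0 \<noteq> 0" using Junit[OF d0J] u_def by auto
  define q' where "q' = smult u (q - [:d0:])"
  have q'z: "poly q' z = 1" unfolding q'_def u_def z_def using q(2) d1 by simp
  have cq'0: "coeff q' 0 = 0" unfolding q'_def d0_def by simp
  have cq'J: "coeff q' j \<in> J" for j
  proof -
    have "coeff [:d0:] j \<in> J" using d0J J0 by (cases j) auto
    then have "coeff q j + - coeff [:d0:] j \<in> J" using q(1) by (intro Jadd Jneg) auto
    then have "(coeff q j - coeff [:d0:] j) * u \<in> J" using Jmul uV by simp
    then show ?thesis unfolding q'_def by (simp add: mult.commute)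
  qed
  have dq': "degree q' \<le> k" unfolding q'_def k_def
    by (rule order.trans[OF degree_smult_le]) (rule degree_diff_le, auto)
  define r where "r = (\<Sum>j\<in>{1..k}. monom (coeff q' j) (n - j))"
  have "poly r y = (\<Sum>j\<in>{1..k}. coeff q' j * y ^ (n - j))"
    unfolding r_def by (simp add: poly_monom poly_sum)
  also have "\<dots> = (\<Sum>j\<in>{1..k}. y ^ n * (coeff q' j * z ^ j))"
  proof (rule sum.cong[OF refl])
    fix j assume "j \<in> {1..k}"
    then have "j \<le> n" using dq unfolding k_def n_def by auto
    then have "y ^ n = y ^ (n - j) * y ^ j" by (metis le_add_diff_inverse2 power_add)
    then show "coeff q' j * y ^ (n - j) = y ^ n * (coeff q' j * z ^ j)"
      unfolding z_def using y0 by (simp add: power_inverse field_simps)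
  qed
  also have "\<dots> = y ^ n * (\<Sum>j\<in>{1..k}. coeff q' j * z ^ j)"
    by (simp add: sum_distrib_left)
  also have "(\<Sum>j\<in>{1..k}. coeff q' j * z ^ j) = (\<Sum>j\<le>k. coeff q' j * z ^ j)"
  proof -
    have "{..k} = insert 0 {1..k}" by auto
    then show ?thesis using cq'0 by simp
  qed
  also have "\<dots> = poly q' z"
    using dq' by (simp add: poly_altdef sum.mono_neutral_right[of "{..k}" "{..degree q'}"] coeff_eq_0)
  finally have ry: "poly r y = y ^ n" using q'z by simp
  have rJ: "coeff r i \<in> J" for i
    unfolding r_def coeff_sum by (rule ideal_like_sum[OF J0 Jadd]) (auto simp: cq'J J0)
  have dr: "degree r \<le> n - 1"
    unfolding r_def by (rule degree_sum_le) (auto intro: order.trans[OF degree_monom_le])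
  define c where "c = coeff p n"
  define p' where "p' = p - monom c n + smult c r"
  have "poly p' y = 1" unfolding p'_def using ry p(2) by (simp add: poly_monom)
  moreover have "coeff p' i \<in> J" for i
  proof -
    have cJ: "c \<in> J" using p(1) c_def by auto
    have "coeff (monom c n) i \<in> J" using cJ J0 by simp
    then have "coeff p i + - coeff (monom c n) i \<in> J" using p(1) by (intro Jadd Jneg) auto
    then have "coeff p i - coeff (monom c n) i \<in> J" by simp
    moreover have "c * coeff r i \<in> J" using Jmul[OF rJ[of i]] cJ JV rJ by (metis mult.commute subsetD)
    ultimately show ?thesis unfolding p'_def by (simp add: Jadd)
  qed
  moreover have "degree p' \<le> n - 1"
  proof (rule degree_le, intro allI impI)
    fix i assume "n - 1 < i"
    then have "n \<le> i" by auto
    have "coeff r i = 0" using dr \<open>n - 1 < i\<close> by (simp add: coeff_eq_0)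
    moreover have "i \<noteq> n \<Longrightarrow> coeff p i = 0" using \<open>n \<le> i\<close> by (simp add: coeff_eq_0 n_def)
    ultimately show "coeff p' i = 0" unfolding p'_def c_def by auto
  qed
  ultimately show ?thesis using n0 unfolding n_def by (intro exI[of _ p']) auto
qed



lemma valuation_exists:
  assumes R: "is_subring R" and ic: "is_integrally_closed R" and g: "g \<notin> R"
  shows "\<exists>V. is_valuation_ring V \<and> R \<subseteq> V \<and> g \<notin> V"
proof -
  have g0: "g \<noteq> 0" using g subringD(1)[OF R] by auto
  define t where "t = inverse g"
  have tg: "t * g = 1" "g * t = 1" using g0 t_def by auto
  define \<Sigma> where "\<Sigma> = {B. is_subring B \<and> adjoin R t \<subseteq> B \<and> g \<notin> B}"
  have A\<Sigma>: "adjoin R t \<in> \<Sigma>"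
    unfolding \<Sigma>_def t_def using adjoin_subring(1)[OF R] not_in_adjoin_inverse[OF R ic g] by auto
  have "\<exists>M\<in>\<Sigma>. \<forall>X\<in>\<Sigma>. M \<subseteq> X \<longrightarrow> X = M"
  proof (rule subset_Zorn_nonempty)
    show "\<Sigma> \<noteq> {}" using A\<Sigma> by auto
  next
    fix C assume C: "C \<noteq> {}" "subset.chain \<Sigma> C"
    then have sub: "C \<subseteq> \<Sigma>" and ch: "\<And>X Y. X \<in> C \<Longrightarrow> Y \<in> C \<Longrightarrow> X \<subseteq> Y \<or> Y \<subseteq> X"
      by (auto simp: subset_chain_def)
    have "is_subring (\<Union>C)"
      by (rule subring_chain_Union[OF C(1)]) (use sub ch in \<open>auto simp: \<Sigma>_def\<close>)
    moreover have "adjoin R t \<subseteq> \<Union>C" using C(1) sub by (auto simp: \<Sigma>_def)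
    moreover have "g \<notin> \<Union>C" using sub by (auto simp: \<Sigma>_def)
    ultimately show "\<Union>C \<in> \<Sigma>" unfolding \<Sigma>_def by blast
  qed
  then obtain V where V\<Sigma>: "V \<in> \<Sigma>" and Vmax: "\<And>X. X \<in> \<Sigma> \<Longrightarrow> V \<subseteq> X \<Longrightarrow> X = V" by blast
  have V: "is_subring V" and AV: "adjoin R t \<subseteq> V" and gV: "g \<notin> V" using V\<Sigma> \<Sigma>_def by auto
  have RV: "R \<subseteq> V" using AV adjoin_subring(2)[OF R] by blast
  have tV: "t \<in> V" using AV adjoin_subring(3)[OF R] by blast
  have adj: "g \<in> adjoin V y" if "y \<notin> V" for y
  proof (rule ccontr)
    assume "g \<notin> adjoin V y"
    then have "adjoin V y \<in> \<Sigma>" using adjoin_subring[OF V] AV unfolding \<Sigma>_def by blast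
    then have "adjoin V y = V" using Vmax adjoin_subring(2)[OF V] by blast
    then show False using adjoin_subring(3)[OF V, of y] that by simp
  qed
  have jac: "1 + t * u \<noteq> 0 \<and> inverse (1 + t * u) \<in> V" if uV: "u \<in> V" for u
  proof (intro conjI)
    show "1 + t * u \<noteq> 0"
    proof
      assume "1 + t * u = 0"
      then have "g * (1 + t * u) = 0" by simp
      then have "g + (g * t) * u = 0" by (simp add: algebra_simps)
      then have "g + u = 0" using tg by simp
      then have "g = - u" by (simp add: eq_neg_iff_add_eq_0)
      then show False using gV subringD(5)[OF V uV] by simp
    qed
    define e where "e = 1 + t * u"
    have eV: "e \<in> V" unfolding e_def using V tV uV by (auto intro: subringD)
    have e0: "e \<noteq> 0" using \<open>1 + t * u \<noteq> 0\<close> e_def by simp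
    show "inverse (1 + t * u) \<in> V"
    proof (rule ccontr)
      assume "inverse (1 + t * u) \<notin> V"
      then have "g \<in> adjoin V (inverse e)" using adj e_def by simp
      then obtain p where p: "g = poly p (inverse e)" "\<forall>i. coeff p i \<in> V"
        unfolding adjoin_def by auto
      have "poly (reflect_poly p) e = e ^ degree p * g"
        using p(1) by (simp add: poly_reflect_poly_nz[OF e0])
      moreover have "poly (reflect_poly p) e \<in> V"
        by (rule poly_in_subring[OF V _ eV]) (use p(2) V in \<open>auto simp: coeff_reflect_poly subringD\<close>)
      ultimately have egV: "e ^ degree p * g \<in> V" by simp
      have "\<exists>w\<in>V. e ^ n = 1 + t * w" for n
      proof (induction n)
        case 0 then show ?case using subringD(1)[OF V] by (intro bexI[of _ 0]) auto
      next
        case (Suc n)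
        then obtain w where w: "w \<in> V" "e ^ n = 1 + t * w" by blast
        have "e ^ Suc n = 1 + t * (u + w + t * u * w)"
          using w(2) by (simp add: e_def algebra_simps)
        moreover have "u + w + t * u * w \<in> V" using uV w(1) tV V by (auto intro!: subringD)
        ultimately show ?case by blast
      qed
      then obtain w where w: "w \<in> V" "e ^ degree p = 1 + t * w" by blast
      have "e ^ degree p * g = g + w" using w(2) tg by (simp add: algebra_simps)
      then have "g = e ^ degree p * g - w" by simp
      then have "g \<in> V" using egV w(1) subring_diff[OF V] by metis
      then show False using gV by simp
    qed
  qed
  define J where "J = {t * v | v. v \<in> V}"
  have J0: "0 \<in> J" unfolding J_def using subringD(1)[OF V] by (auto intro!: exI[of _ 0])
  have Jadd: "a + b \<in> J" if "a \<in> J" "b \<in> J" for a b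
    using that unfolding J_def by (auto simp: distrib_left[symmetric] intro!: subringD(3)[OF V])
  have Jneg: "- a \<in> J" if aJ: "a \<in> J" for a
  proof -
    obtain v where "v \<in> V" "a = t * v" using aJ unfolding J_def by auto
    then show ?thesis unfolding J_def by (intro CollectI exI[of _ "- v"]) (auto intro: subringD[OF V])
  qed
  have Jmul: "a * b \<in> J" if aJ: "a \<in> J" and bV: "b \<in> V" for a b
  proof -
    obtain v where "v \<in> V" "a = t * v" using aJ unfolding J_def by auto
    then show ?thesis unfolding J_def using bV
      by (intro CollectI exI[of _ "v * b"]) (auto intro: subringD[OF V])
  qed
  have JV: "J \<subseteq> V" unfolding J_def using tV subringD(4)[OF V] by auto
  have Junit: "1 - a \<noteq> 0 \<and> inverse (1 - a) \<in> V" if aJ: "a \<in> J" for a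
  proof -
    obtain v where v: "v \<in> V" "a = t * v" using aJ unfolding J_def by auto
    have "1 - a = 1 + t * (- v)" using v by simp
    then show ?thesis using jac[of "- v"] subringD(5)[OF V v(1)] by simp
  qed
  have J1: "1 \<notin> J"
  proof
    assume "1 \<in> J"
    then obtain v where v: "v \<in> V" "1 = t * v" unfolding J_def by auto
    then have "g = v" using tg by (metis mult.assoc mult_1 mult_1_right)
    then show False using gV v by simp
  qed
  have rep: "\<exists>p. (\<forall>i. coeff p i \<in> J) \<and> poly p y = 1" if yV: "y \<notin> V" for y
  proof -
    obtain p where p: "g = poly p y" "\<forall>i. coeff p i \<in> V" using adj[OF yV] unfolding adjoin_def by auto
    have "\<forall>i. coeff (smult t p) i \<in> J" using p(2) unfolding J_def by auto
    moreover have "poly (smult t p) y = 1" using p(1) tg by simp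
    ultimately show ?thesis by blast
  qed
  have "is_valuation_ring V"
    unfolding is_valuation_ring_def
  proof (intro conjI V allI impI)
    fix y :: 'a assume y0: "y \<noteq> 0"
    show "y \<in> V \<or> inverse y \<in> V"
    proof (rule ccontr)
      assume "\<not> (y \<in> V \<or> inverse y \<in> V)"
      then have ny: "y \<notin> V" and nz: "inverse y \<notin> V" by auto
      define P where "P = (\<lambda>x p. (\<forall>i. coeff p i \<in> J) \<and> poly p x = 1)"
      obtain p0 where "P y p0" using rep[OF ny] P_def by blast
      then obtain p where p: "P y p" and pmin: "\<And>p'. P y p' \<Longrightarrow> degree p \<le> degree p'"
        using ex_has_least_nat[of "P y" p0 degree] by blast
      obtain q0 where "P (inverse y) q0" using rep[OF nz] P_def by blast
      then obtain q where q: "P (inverse y) q" and qmin: "\<And>q'. P (inverse y) q' \<Longrightarrow> degree q \<le> degree q'"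
        using ex_has_least_nat[of "P (inverse y)" q0 degree] by blast
      show False
      proof (cases "degree q \<le> degree p")
        case True
        from degree_reduce[OF V J0 Jadd Jneg Jmul JV Junit J1 y0, of p q] p q True
        obtain p' where "P y p'" "degree p' < degree p" unfolding P_def by blast
        then show False using pmin by fastforce
      next
        case False
        have iy0: "inverse y \<noteq> 0" using y0 by simp
        from degree_reduce[OF V J0 Jadd Jneg Jmul JV Junit J1 iy0, of q p] p q False
        obtain q' where "P (inverse y) q'" "degree q' < degree q" unfolding P_def by auto
        then show False using qmin by fastforce
      qed
    qed
  qed
  then show ?thesis using RV gV by blast
qed



definition vm :: "'a::field set \<Rightarrow> 'a set" where
  "vm V = {x \<in> V. x = 0 \<or> inverse x \<notin> V}"

lemma valD: "is_valuation_ring V \<Longrightarrow> is_subring V"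
  unfolding is_valuation_ring_def by auto

lemma val_or: "is_valuation_ring V \<Longrightarrow> x \<noteq> 0 \<Longrightarrow> x \<in> V \<or> inverse x \<in> V"
  unfolding is_valuation_ring_def by auto

lemma vm_subset: "vm V \<subseteq> V" unfolding vm_def by auto

lemma vm_0: "is_subring V \<Longrightarrow> 0 \<in> vm V" unfolding vm_def by (auto simp: subringD)

lemma vm_1: "1 \<notin> vm V" unfolding vm_def by auto

lemma vm_mult:
  assumes V: "is_subring V" and x: "x \<in> vm V" and r: "r \<in> V"
  shows "r * x \<in> vm V"
proof -
  have "r * x \<in> V" using x r V by (auto simp: vm_def subringD)
  moreover have "r * x = 0 \<or> inverse (r * x) \<notin> V"
  proof (rule ccontr)
    assume "\<not> (r * x = 0 \<or> inverse (r * x) \<notin> V)"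
    then have h: "r * x \<noteq> 0" "inverse (r * x) \<in> V" by auto
    then have eq: "inverse x = r * inverse (r * x)" by (simp add: field_simps)
    have "r * inverse (r * x) \<in> V" using subringD(4)[OF V r h(2)] .
    then have "inverse x \<in> V" using eq by metis
    then show False using x h by (auto simp: vm_def)
  qed
  ultimately show ?thesis unfolding vm_def by auto
qed

lemma vm_add:
  assumes V: "is_valuation_ring V" and x: "x \<in> vm V" and y: "y \<in> vm V"
  shows "x + y \<in> vm V"
proof -
  have S: "is_subring V" using V by (rule valD)
  have wlog: "a + b \<in> vm V" if a: "a \<in> vm V" and b: "b \<in> vm V" and ba: "b * inverse a \<in> V" and a0: "a \<noteq> 0" for a b
  proof -
    have "a + b \<in> V" using a b S by (auto simp: vm_def subringD)
    moreover have "a + b = 0 \<or> inverse (a + b) \<notin> V"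
    proof (rule ccontr)
      assume "\<not> (a + b = 0 \<or> inverse (a + b) \<notin> V)"
      then have h: "a + b \<noteq> 0" "inverse (a + b) \<in> V" by auto
      have "inverse a = (1 + b * inverse a) * inverse (a + b)"
        using a0 h(1) by (simp add: field_simps)
      moreover have "1 + b * inverse a \<in> V" by (rule subringD(3)[OF S subringD(2)[OF S] ba])
      then have "(1 + b * inverse a) * inverse (a + b) \<in> V" using subringD(4)[OF S _ h(2)] by blast
      ultimately have "inverse a \<in> V" by metis
      then show False using a a0 by (auto simp: vm_def)
    qed
    ultimately show ?thesis unfolding vm_def by auto
  qed
  show ?thesis
  proof (cases "x = 0 \<or> y = 0")
    case True then show ?thesis using x y by auto
  next
    case False
    then have "y * inverse x \<noteq> 0" by auto
    then have "y * inverse x \<in> V \<or> inverse (y * inverse x) \<in> V" using val_or[OF V] by blast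
    then show ?thesis
    proof
      assume "y * inverse x \<in> V" then show ?thesis using wlog x y False by blast
    next
      assume "inverse (y * inverse x) \<in> V"
      then have "x * inverse y \<in> V" by (simp add: mult.commute)
      then show ?thesis using wlog[of y x] x y False by (simp add: add.commute)
    qed
  qed
qed

lemma vm_neg: "is_subring V \<Longrightarrow> x \<in> vm V \<Longrightarrow> - x \<in> vm V"
  using vm_mult[of V x "-1"] by (simp add: subringD)

lemma unit_not_vm: "x \<in> V \<Longrightarrow> x \<notin> vm V \<Longrightarrow> x \<noteq> 0 \<and> inverse x \<in> V"
  unfolding vm_def by auto

lemma unit_add_vm:
  assumes V: "is_valuation_ring V" and u: "u \<in> V" "u \<notin> vm V" and m: "m \<in> vm V"
  shows "u + m \<in> V" "u + m \<notin> vm V"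
proof -
  have S: "is_subring V" using V by (rule valD)
  show "u + m \<in> V" using u m S by (auto simp: vm_def subringD)
  show "u + m \<notin> vm V"
  proof
    assume "u + m \<in> vm V"
    then have "(u + m) + - m \<in> vm V" using vm_add[OF V _ vm_neg[OF S m]] by blast
    then show False using u by simp
  qed
qed

lemma unit_mult:
  assumes S: "is_subring V" and "u \<in> V" "u \<notin> vm V" "v \<in> V" "v \<notin> vm V"
  shows "u * v \<in> V" "u * v \<notin> vm V"
  using assms by (auto simp: vm_def subringD)

definition gs :: "nat \<Rightarrow> 'a::field \<Rightarrow> 'a" where
  "gs s y = (\<Sum>j<s. y ^ j)"

lemma gs_add: "gs (a + b) y = gs a y + y ^ a * gs b y"
  unfolding gs_def
  by (induction b) (auto simp: algebra_simps power_add)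

lemma gs_Suc: "gs (Suc s) y = 1 + y * gs s y"
  using gs_add[of 1 s y] by (simp add: gs_def)

lemma gs_1 [simp]: "gs (Suc 0) y = 1" unfolding gs_def by simp

lemma gs_0 [simp]: "gs 0 y = 0" unfolding gs_def by simp

lemma gs_in: "is_subring V \<Longrightarrow> y \<in> V \<Longrightarrow> gs s y \<in> V"
  unfolding gs_def by (auto intro!: subring_sum subring_power)

lemma gs_inverse:
  fixes y :: "'a::field"
  assumes y0: "y \<noteq> 0"
  shows "gs s y = y ^ (s - 1) * gs s (inverse y)"
proof -
  have "gs s y = (\<Sum>j<s. y ^ (s - Suc j))"
    unfolding gs_def by (rule sum.nat_diff_reindex[symmetric])
  also have "\<dots> = (\<Sum>j<s. y ^ (s - 1) * inverse y ^ j)"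
  proof (rule sum.cong[OF refl])
    fix j assume "j \<in> {..<s}"
    then have "s - 1 = (s - Suc j) + j" by auto
    then have "y ^ (s - 1) = y ^ (s - Suc j) * y ^ j" by (metis power_add)
    then show "y ^ (s - Suc j) = y ^ (s - 1) * inverse y ^ j"
      using y0 by (simp add: power_inverse field_simps)
  qed
  also have "\<dots> = y ^ (s - 1) * gs s (inverse y)"
    unfolding gs_def by (simp add: sum_distrib_left)
  finally show ?thesis .
qed

lemma gs_mult_bad:
  assumes V: "is_valuation_ring V"
  shows "\<exists>m\<ge>2. \<forall>s\<ge>1. (y \<in> V \<and> y \<notin> vm V \<and> gs s y \<in> vm V) \<longrightarrow> m dvd s"
proof (cases "y \<in> V \<and> y \<notin> vm V \<and> (\<exists>s\<ge>1. gs s y \<in> vm V)")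
  case False
  then show ?thesis by (intro exI[of _ 2]) auto
next
  case True
  have S: "is_subring V" using V by (rule valD)
  have yV: "y \<in> V" and yu: "y \<notin> vm V" using True by auto
  define m where "m = (LEAST s. s \<ge> 1 \<and> gs s y \<in> vm V)"
  have m: "m \<ge> 1" "gs m y \<in> vm V" unfolding m_def using True LeastI_ex[of "\<lambda>s. s \<ge> 1 \<and> gs s y \<in> vm V"] by auto
  have mmin: "\<And>r. r \<ge> 1 \<Longrightarrow> r < m \<Longrightarrow> gs r y \<notin> vm V"
    unfolding m_def using not_less_Least by blast
  have m2: "m \<ge> 2"
  proof (rule ccontr)
    assume "\<not> m \<ge> 2" then have "m = 1" using m(1) by auto
    then show False using m(2) vm_1 by auto
  qed
  have ypow: "y ^ n \<in> V \<and> y ^ n \<notin> vm V" for n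
  proof (induction n)
    case 0 then show ?case using S vm_1 by (auto simp: subringD)
  next
    case (Suc n) then show ?case using unit_mult[OF S yV yu] by simp
  qed
  have qm: "gs (q * m) y \<in> vm V" for q
  proof (induction q)
    case 0 then show ?case using vm_0[OF S] by simp
  next
    case (Suc q)
    have "gs (Suc q * m) y = gs (q * m) y + y ^ (q * m) * gs m y"
      by (metis gs_add mult_Suc add.commute)
    then show ?case using Suc vm_add[OF V] vm_mult[OF S m(2)] ypow by auto
  qed
  have "m dvd s" if s: "s \<ge> 1" "gs s y \<in> vm V" for s
  proof (rule ccontr)
    assume nd: "\<not> m dvd s"
    define q r where "q = s div m" and "r = s mod m"
    have sqr: "s = q * m + r" unfolding q_def r_def by simp
    have r1: "r \<ge> 1" "r < m" using nd m(1) unfolding r_def by (auto simp: dvd_eq_mod_eq_0)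
    have grV: "gs r y \<in> V" "gs r y \<notin> vm V" using gs_in[OF S yV] mmin[OF r1] by auto
    have u: "y ^ (q * m) * gs r y \<in> V" "y ^ (q * m) * gs r y \<notin> vm V"
      using unit_mult[OF S _ _ grV] ypow by auto
    have "gs s y = y ^ (q * m) * gs r y + gs (q * m) y" by (simp add: sqr gs_add)
    then have "gs s y \<notin> vm V" using unit_add_vm[OF V u qm] by simp
    then show False using s by simp
  qed
  then show ?thesis using m2 by blast
qed

lemma gs_good:
  assumes V: "is_valuation_ring V" and s2: "s \<ge> 2"
    and good: "y \<in> V \<Longrightarrow> y \<notin> vm V \<Longrightarrow> gs s y \<notin> vm V"
  shows "gs s y \<noteq> 0" "\<And>j. j < s \<Longrightarrow> y ^ j * inverse (gs s y) \<in> V"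
proof -
  have S: "is_subring V" using V by (rule valD)
  have case_a: "gs s x \<noteq> 0 \<and> inverse (gs s x) \<in> V" if x: "x \<in> vm V" for x
  proof -
    obtain s' where s': "s = Suc s'" using s2 by (cases s) auto
    have "gs s x = 1 + x * gs s' x" using s' gs_Suc by simp
    moreover have "x * gs s' x \<in> vm V"
      using vm_mult[OF S x gs_in[OF S]] x vm_subset by (auto simp: mult.commute)
    moreover have "(1::'a) \<in> V" "1 \<notin> vm V" using S vm_1 by (auto simp: subringD)
    ultimately have "gs s x \<in> V" "gs s x \<notin> vm V" using unit_add_vm[OF V] by auto
    then show ?thesis using unit_not_vm by blast
  qed
  have "gs s y \<noteq> 0 \<and> (\<forall>j<s. y ^ j * inverse (gs s y) \<in> V)"
  proof (cases "y \<in> V")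
    case True
    have inv: "gs s y \<noteq> 0 \<and> inverse (gs s y) \<in> V"
    proof (cases "y \<in> vm V")
      case True then show ?thesis using case_a by blast
    next
      case False
      then show ?thesis using good[OF \<open>y \<in> V\<close> False] gs_in[OF S \<open>y \<in> V\<close>] unit_not_vm by blast
    qed
    then show ?thesis using True S by (auto intro!: subringD(4) subring_power)
  next
    case False
    then have y0: "y \<noteq> 0" using S by (auto simp: subringD)
    define z where "z = inverse y"
    have zV: "z \<in> V" using val_or[OF V y0] False z_def by auto
    have zvm: "z \<in> vm V" using zV False z_def by (auto simp: vm_def)
    have gz: "gs s z \<noteq> 0" "inverse (gs s z) \<in> V" using case_a[OF zvm] by auto
    have eq: "gs s y = y ^ (s - 1) * gs s z" using gs_inverse[OF y0] z_def by simp
    have "gs s y \<noteq> 0" using eq gz y0 by simp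
    moreover have "y ^ j * inverse (gs s y) \<in> V" if j: "j < s" for j
    proof -
      have "s - 1 = (s - 1 - j) + j" using j by auto
      then have "y ^ (s - 1) = y ^ (s - 1 - j) * y ^ j" by (metis power_add)
      then have "y ^ j * inverse (gs s y) = z ^ (s - 1 - j) * inverse (gs s z)"
        using y0 gz(1) by (simp add: eq z_def power_inverse field_simps)
      then show ?thesis using zV gz S by (auto intro!: subringD(4) subring_power)
    qed
    ultimately show ?thesis by blast
  qed
  then show "gs s y \<noteq> 0" "\<And>j. j < s \<Longrightarrow> y ^ j * inverse (gs s y) \<in> V" by auto
qed

lemma gs_choose:
  assumes fin: "finite \<V>" and val: "\<And>V. V \<in> \<V> \<Longrightarrow> is_valuation_ring V"
  shows "\<exists>s\<ge>2. \<forall>V\<in>\<V>. y \<in> V \<longrightarrow> y \<notin> vm V \<longrightarrow> gs s y \<notin> vm V"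
proof -
  define m where "m V = (SOME m. m \<ge> 2 \<and> (\<forall>s\<ge>1. (y \<in> V \<and> y \<notin> vm V \<and> gs s y \<in> vm V) \<longrightarrow> m dvd s))" for V
  have m: "m V \<ge> 2 \<and> (\<forall>s\<ge>1. (y \<in> V \<and> y \<notin> vm V \<and> gs s y \<in> vm V) \<longrightarrow> m V dvd s)" if "V \<in> \<V>" for V
    unfolding m_def using someI_ex[OF gs_mult_bad[OF val[OF that], of y]] by blast
  define s where "s = Suc (\<Prod>V\<in>\<V>. m V)"
  have p1: "(\<Prod>V\<in>\<V>. m V) \<ge> 1" by (intro prod_ge_1) (use m in fastforce)
  have "s \<ge> 2" using p1 s_def by simp
  moreover have "gs s y \<notin> vm V" if V: "V \<in> \<V>" "y \<in> V" "y \<notin> vm V" for V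
  proof
    assume "gs s y \<in> vm V"
    then have "m V dvd s" using m[OF V(1)] V s_def by auto
    moreover have "m V dvd (\<Prod>V\<in>\<V>. m V)" using fin V(1) by (rule dvd_prodI)
    ultimately have "m V dvd s - (\<Prod>V\<in>\<V>. m V)" by (rule dvd_diff_nat)
    then have "m V dvd 1" unfolding s_def by simp
    then show False using m[OF V(1)] by simp
  qed
  ultimately show ?thesis by blast
qed



definition is_prime_in :: "'a::field set \<Rightarrow> 'a set \<Rightarrow> bool" where
  "is_prime_in S P \<longleftrightarrow> is_ideal_of S P \<and> 1 \<notin> P \<and> (\<forall>a\<in>S. \<forall>b\<in>S. a * b \<in> P \<longrightarrow> a \<in> P \<or> b \<in> P)"

lemma ideal_sum: "is_ideal_of S I \<Longrightarrow> (\<And>i. i \<in> A \<Longrightarrow> f i \<in> I) \<Longrightarrow> sum f A \<in> I"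
  unfolding is_ideal_of_def by (induction A rule: infinite_finite_induct) auto

lemma ideal_diff:
  assumes S: "is_subring S" and I: "is_ideal_of S I" and "a \<in> I" "b \<in> I"
  shows "a - b \<in> I"
proof -
  have "(-1) * b \<in> I" using I assms(4) subringD[OF S] unfolding is_ideal_of_def by blast
  then show ?thesis using I assms(3) unfolding is_ideal_of_def by (metis diff_conv_add_uminus mult_minus1)
qed

lemma ideal_prod:
  assumes S: "is_subring S" and I: "is_ideal_of S I" and fin: "finite A" and i: "i \<in> A" "f i \<in> I"
    and fS: "\<And>j. j \<in> A \<Longrightarrow> f j \<in> S"
  shows "prod f A \<in> I"
proof -
  have "prod f A = f i * prod f (A - {i})" using fin i(1) by (rule prod.remove)
  moreover have "prod f (A - {i}) \<in> S" using fS by (auto intro!: subring_prod[OF S])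
  ultimately show ?thesis using I i(2) unfolding is_ideal_of_def by (metis mult.commute)
qed

lemma prime_prod:
  assumes P: "is_prime_in S P" and S: "is_subring S" and fin: "finite A"
    and fS: "\<And>j. j \<in> A \<Longrightarrow> f j \<in> S" and pr: "prod f A \<in> P"
  shows "\<exists>i\<in>A. f i \<in> P"
  using fin fS pr
proof (induction A rule: finite_induct)
  case empty then show ?case using P by (simp add: is_prime_in_def)
next
  case (insert x F)
  have "f x * prod f F \<in> P" using insert by simp
  moreover have "prod f F \<in> S" using insert.prems by (auto intro!: subring_prod[OF S])
  ultimately have "f x \<in> P \<or> prod f F \<in> P" using P insert.prems(1) unfolding is_prime_in_def by blast
  then show ?case using insert by auto
qed

lemma prime_avoidance:
  assumes S: "is_subring S" and fin: "finite \<P>" and pr: "\<And>P. P \<in> \<P> \<Longrightarrow> is_prime_in S P"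
    and I: "is_ideal_of S I" and cov: "I \<subseteq> \<Union>\<P>"
  shows "\<exists>P\<in>\<P>. I \<subseteq> P"
  using fin pr cov
proof (induction \<P> rule: finite_psubset_induct)
  case (psubset \<P>)
  show ?case
  proof (cases "\<exists>P0\<in>\<P>. I \<subseteq> \<Union>(\<P> - {P0})")
    case True
    then obtain P0 where P0: "P0 \<in> \<P>" "I \<subseteq> \<Union>(\<P> - {P0})" by blast
    have "\<exists>P\<in>\<P> - {P0}. I \<subseteq> P"
      by (rule psubset.IH) (use P0 psubset.prems in auto)
    then show ?thesis by auto
  next
    case False
    have "0 \<in> I" using I unfolding is_ideal_of_def by auto
    then obtain P0 where P0: "P0 \<in> \<P>" using psubset.prems(2) by auto
    have "\<forall>P\<in>\<P>. \<exists>a. a \<in> I \<and> a \<notin> \<Union>(\<P> - {P})" using False by auto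
    then obtain a where a: "\<And>P. P \<in> \<P> \<Longrightarrow> a P \<in> I \<and> a P \<notin> \<Union>(\<P> - {P})" by metis
    have aP: "a P \<in> P" if "P \<in> \<P>" for P using a[OF that] psubset.prems(2) by blast
    have aS: "a P \<in> S" if "P \<in> \<P>" for P using a[OF that] I unfolding is_ideal_of_def by auto
    show ?thesis
    proof (cases "\<P> = {P0}")
      case True
      then show ?thesis using psubset.prems(2) by auto
    next
      case False
      then obtain P1 where P1: "P1 \<in> \<P>" "P1 \<noteq> P0" using P0 by blast
      define b where "b = a P0 + prod a (\<P> - {P0})"
      have prodI: "prod a (\<P> - {P0}) \<in> I"
        by (rule ideal_prod[OF S I _ _ _ aS, of _ P1]) (use P1 a psubset.hyps in auto)
      have "b \<in> I" using I a[OF P0] prodI unfolding b_def is_ideal_of_def by auto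
      then obtain P where P: "P \<in> \<P>" "b \<in> P" using psubset.prems(2) by auto
      have Pid: "is_ideal_of S P" using psubset.prems(1)[OF P(1)] by (simp add: is_prime_in_def)
      show ?thesis
      proof (cases "P = P0")
        case True
        then have "prod a (\<P> - {P0}) \<in> P0"
          using ideal_diff[OF S Pid P(2) aP[OF P(1)]] b_def by simp
        then have "\<exists>Q\<in>\<P> - {P0}. a Q \<in> P0"
          by (intro prime_prod[OF psubset.prems(1)[OF P0] S]) (use psubset.hyps aS in auto)
        then obtain Q where "Q \<in> \<P> - {P0}" "a Q \<in> P0" by blast
        then show ?thesis using a[of Q] P0 by auto
      next
        case False
        have "prod a (\<P> - {P0}) \<in> P"
          by (rule ideal_prod[OF S Pid _ _ _ aS]) (use P False aP psubset.hyps in auto)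
        then have "a P0 \<in> P" using ideal_diff[OF S Pid P(2)] b_def by fastforce
        then show ?thesis using a[OF P0] P False by auto
      qed
    qed
  qed
qed



lemma localization_subring:
  assumes S: "is_subring S" and M: "is_prime_in S M"
  shows "is_subring (localization_at S M)"
proof -
  have MI: "is_ideal_of S M" and M1: "1 \<notin> M" and Mp: "\<And>a b. a \<in> S \<Longrightarrow> b \<in> S \<Longrightarrow> a * b \<in> M \<Longrightarrow> a \<in> M \<or> b \<in> M"
    using M unfolding is_prime_in_def by auto
  have M0: "0 \<in> M" using MI unfolding is_ideal_of_def by auto
  show ?thesis
    unfolding is_subring_def localization_at_def
  proof (intro conjI ballI)
    show "0 \<in> {a / s |a s. a \<in> S \<and> s \<in> S \<and> s \<notin> M}"
      using S M1 by (intro CollectI exI[of _ 0] exI[of _ 1]) (auto simp: subringD)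
    show "1 \<in> {a / s |a s. a \<in> S \<and> s \<in> S \<and> s \<notin> M}"
      using S M1 by (intro CollectI exI[of _ 1] exI[of _ 1]) (auto simp: subringD)
  next
    fix x y assume "x \<in> {a / s |a s. a \<in> S \<and> s \<in> S \<and> s \<notin> M}" "y \<in> {a / s |a s. a \<in> S \<and> s \<in> S \<and> s \<notin> M}"
    then obtain a s b t where x: "x = a / s" "a \<in> S" "s \<in> S" "s \<notin> M" and y: "y = b / t" "b \<in> S" "t \<in> S" "t \<notin> M"
      by blast
    have s0: "s \<noteq> 0" "t \<noteq> 0" using x y M0 by auto
    have st: "s * t \<in> S" "s * t \<notin> M" using Mp x y S by (auto simp: subringD)
    have "x + y = (a * t + b * s) / (s * t)" using s0 x y by (simp add: field_simps)
    moreover have "a * t + b * s \<in> S" using x y S by (auto intro!: subringD)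
    ultimately show "x + y \<in> {a / s |a s. a \<in> S \<and> s \<in> S \<and> s \<notin> M}" using st by blast
    have "x * y = (a * b) / (s * t)" using s0 x y by (simp add: field_simps)
    moreover have "a * b \<in> S" using x y S by (auto intro!: subringD)
    ultimately show "x * y \<in> {a / s |a s. a \<in> S \<and> s \<in> S \<and> s \<notin> M}" using st by blast
  next
    fix x assume "x \<in> {a / s |a s. a \<in> S \<and> s \<in> S \<and> s \<notin> M}"
    then obtain a s where x: "x = a / s" "a \<in> S" "s \<in> S" "s \<notin> M" by blast
    have "- x = (- a) / s" using x by simp
    moreover have "- a \<in> S" using x S by (auto intro!: subringD)
    ultimately show "- x \<in> {a / s |a s. a \<in> S \<and> s \<in> S \<and> s \<notin> M}" using x by blast
  qed
qed

lemma inter_subring: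
  assumes "\<V> \<noteq> {}" "\<And>V. V \<in> \<V> \<Longrightarrow> is_subring V"
  shows "is_subring (\<Inter>\<V>)"
  using assms unfolding is_subring_def by blast

lemma maximal_not_1:
  assumes "is_maximal_ideal_of S M"
  shows "1 \<notin> M"
proof
  assume "1 \<in> M"
  then have "S \<subseteq> M" using assms unfolding is_maximal_ideal_of_def is_ideal_of_def by (metis mult_1_right subsetI)
  then show False using assms unfolding is_maximal_ideal_of_def is_ideal_of_def by blast
qed

lemma finite_inter_valuation:
  assumes fin: "finite \<V>" and ne: "\<V> \<noteq> {}" and val: "\<And>V. V \<in> \<V> \<Longrightarrow> is_valuation_ring V"
  shows "is_pruefer (\<Inter>\<V>) \<and> is_semilocal (\<Inter>\<V>)"
proof -
  define S where "S = \<Inter>\<V>"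
  have S: "is_subring S" unfolding S_def using inter_subring[OF ne] val valD by blast
  have Vs: "\<And>V. V \<in> \<V> \<Longrightarrow> is_subring V" using val valD by blast
  define P where "P V = vm V \<inter> S" for V
  have Pprime: "is_prime_in S (P V)" if V: "V \<in> \<V>" for V
  proof -
    have SV: "S \<subseteq> V" using V S_def by auto
    have "is_ideal_of S (P V)"
      unfolding is_ideal_of_def P_def
    proof (intro conjI ballI)
      show "0 \<in> vm V \<inter> S" using vm_0[OF Vs[OF V]] S by (auto simp: subringD)
    next
      fix x y assume "x \<in> vm V \<inter> S" "y \<in> vm V \<inter> S"
      then show "x + y \<in> vm V \<inter> S" using vm_add[OF val[OF V]] S by (auto simp: subringD)
    next
      fix r x assume "r \<in> S" "x \<in> vm V \<inter> S"
      then show "r * x \<in> vm V \<inter> S" using vm_mult[OF Vs[OF V]] SV S by (auto simp: subringD)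
    qed auto
    moreover have "1 \<notin> P V" using vm_1 P_def by auto
    moreover have "a \<in> P V \<or> b \<in> P V" if "a \<in> S" "b \<in> S" "a * b \<in> P V" for a b
      using that unit_mult[OF Vs[OF V], of a b] SV P_def by auto
    ultimately show ?thesis unfolding is_prime_in_def by blast
  qed
  have units: "x \<noteq> 0 \<and> inverse x \<in> S" if "x \<in> S" "\<And>V. V \<in> \<V> \<Longrightarrow> x \<notin> P V" for x
  proof -
    have "\<And>V. V \<in> \<V> \<Longrightarrow> x \<noteq> 0 \<and> inverse x \<in> V"
      using that unit_not_vm S_def P_def by auto
    then show ?thesis using ne S_def by auto
  qed
  have maxP: "\<exists>V\<in>\<V>. M = P V" if M: "is_maximal_ideal_of S M" for M
  proof -
    have MI: "is_ideal_of S M" using M unfolding is_maximal_ideal_of_def by auto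
    have M1: "1 \<notin> M" using maximal_not_1[OF M] .
    have "M \<subseteq> \<Union>(P ` \<V>)"
    proof
      fix x assume xM: "x \<in> M"
      then have xS: "x \<in> S" using MI unfolding is_ideal_of_def by auto
      show "x \<in> \<Union>(P ` \<V>)"
      proof (rule ccontr)
        assume "x \<notin> \<Union>(P ` \<V>)"
        then have "x \<noteq> 0 \<and> inverse x \<in> S" using units[OF xS] by auto
        then have "inverse x * x \<in> M" using MI xM unfolding is_ideal_of_def by blast
        then show False using M1 \<open>x \<noteq> 0 \<and> inverse x \<in> S\<close> by simp
      qed
    qed
    then have "\<exists>Q\<in>P ` \<V>. M \<subseteq> Q"
      by (intro prime_avoidance[OF S _ _ MI]) (use fin Pprime in auto)
    then obtain Q where Q: "Q \<in> P ` \<V>" "M \<subseteq> Q" by blast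
    then obtain V where V: "V \<in> \<V>" "Q = P V" by blast
    have "is_ideal_of S Q" "1 \<notin> Q" using Pprime[OF V(1)] V(2) by (auto simp: is_prime_in_def)
    moreover have "1 \<in> S" using S by (simp add: subringD)
    moreover have Mmax: "\<And>J. is_ideal_of S J \<Longrightarrow> M \<subseteq> J \<Longrightarrow> J \<noteq> S \<Longrightarrow> J = M"
      using M unfolding is_maximal_ideal_of_def by blast
    ultimately have "Q = M" using Q(2) by metis
    then show ?thesis using V by blast
  qed
  have semi: "is_semilocal S"
    unfolding is_semilocal_def
  proof (rule finite_subset[of _ "P ` \<V>"])
    show "{M. is_maximal_ideal_of S M} \<subseteq> P ` \<V>" using maxP by blast
    show "finite (P ` \<V>)" using fin by simp
  qed
  have "is_valuation_ring (localization_at S M)" if M: "is_maximal_ideal_of S M" for M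
  proof -
    obtain V0 where V0: "V0 \<in> \<V>" "M = P V0" using maxP[OF M] by blast
    have Mp: "is_prime_in S M" using Pprime[OF V0(1)] V0(2) by simp
    have MI: "is_ideal_of S M" and M1: "1 \<notin> M" using Mp unfolding is_prime_in_def by auto
    have M0: "0 \<in> M" using MI unfolding is_ideal_of_def by auto
    show ?thesis
      unfolding is_valuation_ring_def
    proof (intro conjI allI impI localization_subring[OF S Mp])
      fix y :: 'a assume y0: "y \<noteq> 0"
      obtain s where s: "s \<ge> 2" "\<forall>V\<in>\<V>. y \<in> V \<longrightarrow> y \<notin> vm V \<longrightarrow> gs s y \<notin> vm V"
        using gs_choose[OF fin val] by blast
      define w where "w = gs s y"
      define \<beta> where "\<beta> j = y ^ j * inverse w" for j
      have w0: "w \<noteq> 0" unfolding w_def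
        by (rule gs_good(1)[OF val[OF V0(1)] s(1)]) (use s(2) V0(1) in blast)
      have \<beta>S: "\<beta> j \<in> S" if "j < s" for j
        unfolding S_def \<beta>_def w_def
      proof
        fix V assume V: "V \<in> \<V>"
        show "y ^ j * inverse (gs s y) \<in> V"
          by (rule gs_good(2)[OF val[OF V] s(1) _ that]) (use s(2) V in blast)
      qed
      have "(\<Sum>j<s. \<beta> j) = (\<Sum>j<s. y ^ j) * inverse w"
        unfolding \<beta>_def by (simp add: sum_distrib_right)
      also have "\<dots> = 1" using w0 by (simp add: w_def gs_def)
      finally have sum1: "(\<Sum>j<s. \<beta> j) = 1" .
      have "\<exists>j<s. \<beta> j \<notin> M"
      proof (rule ccontr)
        assume "\<not> (\<exists>j<s. \<beta> j \<notin> M)"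
        then have "sum \<beta> {..<s} \<in> M" by (intro ideal_sum[OF MI]) auto
        then show False using sum1 M1 by simp
      qed
      then obtain j where j: "j < s" "\<beta> j \<notin> M" by blast
      have bj0: "\<beta> j \<noteq> 0" using j M0 by auto
      have bS: "\<beta> j \<in> S" using \<beta>S[OF j(1)] .
      show "y \<in> localization_at S M \<or> inverse y \<in> localization_at S M"
      proof (cases "Suc j < s")
        case True
        have "\<beta> (Suc j) = y * \<beta> j" unfolding \<beta>_def by simp
        then have "y = \<beta> (Suc j) / \<beta> j" using bj0 by simp
        then have "y \<in> localization_at S M" unfolding localization_at_def
          using \<beta>S[OF True] bS j(2) by blast
        then show ?thesis by blast
      next
        case False
        then have j1: "j = Suc (j - 1)" using j s by auto
        have "\<beta> (Suc (j - 1)) = y * \<beta> (j - 1)" unfolding \<beta>_def by simp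
        then have bj: "\<beta> j = y * \<beta> (j - 1)" using j1 by metis
        then have "\<beta> (j - 1) \<noteq> 0" using bj0 by auto
        then have "inverse y = \<beta> (j - 1) / \<beta> j" using bj y0 by (simp add: field_simps)
        moreover have "\<beta> (j - 1) \<in> S" using \<beta>S j(1) by simp
        ultimately have "inverse y \<in> localization_at S M" unfolding localization_at_def
          using bS j(2) by blast
        then show ?thesis by blast
      qed
    qed
  qed
  then have "is_pruefer S" unfolding is_pruefer_def using S by blast
  then show ?thesis using semi S_def by simp
qed



lemma exists_maximal_ideal:
  assumes R: "is_subring R" and I: "is_ideal_of R I" and I1: "1 \<notin> I"
  shows "\<exists>M. is_maximal_ideal_of R M \<and> I \<subseteq> M"
proof -
  define \<A> where "\<A> = {J. is_ideal_of R J \<and> I \<subseteq> J \<and> 1 \<notin> J}"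
  have "\<exists>M\<in>\<A>. \<forall>X\<in>\<A>. M \<subseteq> X \<longrightarrow> X = M"
  proof (rule subset_Zorn_nonempty)
    show "\<A> \<noteq> {}" using I I1 \<A>_def by auto
  next
    fix C assume C: "C \<noteq> {}" "subset.chain \<A> C"
    then have sub: "C \<subseteq> \<A>" and ch: "\<And>X Y. X \<in> C \<Longrightarrow> Y \<in> C \<Longrightarrow> X \<subseteq> Y \<or> Y \<subseteq> X"
      by (auto simp: subset_chain_def)
    have "is_ideal_of R (\<Union>C)"
      unfolding is_ideal_of_def
    proof (intro conjI ballI)
      show "\<Union>C \<subseteq> R" using sub by (auto simp: \<A>_def is_ideal_of_def)
      show "0 \<in> \<Union>C" using C(1) sub by (auto simp: \<A>_def is_ideal_of_def)
    next
      fix x y assume "x \<in> \<Union>C" "y \<in> \<Union>C"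
      then obtain X Y where XY: "X \<in> C" "Y \<in> C" "x \<in> X" "y \<in> Y" by auto
      have IX: "is_ideal_of R X" and IY: "is_ideal_of R Y" using XY sub by (auto simp: \<A>_def)
      show "x + y \<in> \<Union>C"
      proof (cases "X \<subseteq> Y")
        case True
        then have "x + y \<in> Y" using IY XY unfolding is_ideal_of_def by blast
        then show ?thesis using XY by blast
      next
        case False
        then have "Y \<subseteq> X" using ch[OF XY(1,2)] by blast
        then have "x + y \<in> X" using IX XY unfolding is_ideal_of_def by blast
        then show ?thesis using XY by blast
      qed
    next
      fix r x assume "r \<in> R" "x \<in> \<Union>C"
      then obtain X where X: "X \<in> C" "x \<in> X" "r \<in> R" by auto
      have "is_ideal_of R X" using X sub by (auto simp: \<A>_def)
      then have "r * x \<in> X" using X unfolding is_ideal_of_def by blast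
      then show "r * x \<in> \<Union>C" using X by blast
    qed
    moreover have "I \<subseteq> \<Union>C" "1 \<notin> \<Union>C" using C(1) sub by (auto simp: \<A>_def)
    ultimately show "\<Union>C \<in> \<A>" unfolding \<A>_def by blast
  qed
  then obtain M where M: "M \<in> \<A>" and Mmax: "\<And>X. X \<in> \<A> \<Longrightarrow> M \<subseteq> X \<Longrightarrow> X = M" by blast
  have "is_maximal_ideal_of R M"
    unfolding is_maximal_ideal_of_def
  proof (intro conjI allI impI)
    show "is_ideal_of R M" using M \<A>_def by auto
    have "1 \<notin> M" using M unfolding \<A>_def by blast
    then show "M \<noteq> R" using subringD(2)[OF R] by blast
  next
    fix J assume J: "is_ideal_of R J \<and> M \<subseteq> J \<and> J \<noteq> R"
    have "1 \<notin> J"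
    proof
      assume "1 \<in> J"
      have "r \<in> J" if "r \<in> R" for r
      proof -
        have "r * 1 \<in> J" using J \<open>1 \<in> J\<close> that unfolding is_ideal_of_def by blast
        then show ?thesis by simp
      qed
      then have "R \<subseteq> J" by blast
      then show False using J unfolding is_ideal_of_def by blast
    qed
    moreover have "I \<subseteq> M" using M unfolding \<A>_def by blast
    ultimately have "J \<in> \<A>" using J unfolding \<A>_def by blast
    then show "J = M" using Mmax J by blast
  qed
  moreover have "I \<subseteq> M" using M unfolding \<A>_def by blast
  ultimately show ?thesis by blast
qed

lemma valuation_ic:
  assumes V: "is_valuation_ring V"
  shows "is_integrally_closed V"
  unfolding is_integrally_closed_def
proof (intro allI impI)
  fix p :: "'a poly" and x :: 'a
  assume h: "lead_coeff p = 1 \<and> (\<forall>i. coeff p i \<in> V) \<and> poly p x = 0"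
  have S: "is_subring V" using V by (rule valD)
  show "x \<in> V"
  proof (rule ccontr)
    assume xV: "x \<notin> V"
    then have x0: "x \<noteq> 0" using S by (auto simp: subringD)
    define z where "z = inverse x"
    have zV: "z \<in> V" using val_or[OF V x0] xV z_def by auto
    have z0: "z \<noteq> 0" using x0 z_def by simp
    define r where "r = reflect_poly p"
    have "poly r z = z ^ degree p * poly p x" unfolding r_def using poly_reflect_poly_nz[OF z0] z_def by simp
    then have r0: "poly r z = 0" using h by simp
    have cr: "coeff r i \<in> V" for i unfolding r_def using h S by (auto simp: coeff_reflect_poly subringD)
    have r01: "coeff r 0 = 1" unfolding r_def using h by simp
    obtain a q where rq: "r = pCons a q" by (rule pCons_cases)
    have a1: "a = 1" using r01 rq by simp
    have cq: "coeff q i \<in> V" for i using cr[of "Suc i"] rq by simp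
    have "1 + z * poly q z = 0" using r0 rq a1 by simp
    then have "z * poly q z = - 1" by (simp add: eq_neg_iff_add_eq_0 add.commute)
    then have "x * (z * poly q z) = - x" by simp
    then have "x = - poly q z" using z_def x0 by (simp add: mult.assoc[symmetric])
    moreover have "poly q z \<in> V" by (rule poly_in_subring[OF S cq zV])
    ultimately show False using xV S by (simp add: subringD)
  qed
qed

lemma pruefer_ic:
  assumes P: "is_pruefer R"
  shows "is_integrally_closed R"
  unfolding is_integrally_closed_def
proof (intro allI impI)
  fix p :: "'a poly" and x :: 'a
  assume h: "lead_coeff p = 1 \<and> (\<forall>i. coeff p i \<in> R) \<and> poly p x = 0"
  have R: "is_subring R" using P by (simp add: is_pruefer_def)
  show "x \<in> R"
  proof (rule ccontr)
    assume xR: "x \<notin> R"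
    define I where "I = {r \<in> R. r * x \<in> R}"
    have I: "is_ideal_of R I"
      unfolding is_ideal_of_def
    proof (intro conjI ballI)
      show "I \<subseteq> R" unfolding I_def by auto
      show "0 \<in> I" unfolding I_def using subringD(1)[OF R] by simp
    next
      fix a b assume ab: "a \<in> I" "b \<in> I"
      have "(a + b) * x = a * x + b * x" by (simp add: distrib_right)
      then show "a + b \<in> I" using ab subringD(3)[OF R] unfolding I_def by auto
    next
      fix r a assume ra: "r \<in> R" "a \<in> I"
      have "(r * a) * x = r * (a * x)" by (simp add: mult.assoc)
      moreover have "r * (a * x) \<in> R" using ra subringD(4)[OF R ra(1)] unfolding I_def by auto
      moreover have "r * a \<in> R" using ra subringD(4)[OF R ra(1)] unfolding I_def by auto
      ultimately show "r * a \<in> I" unfolding I_def by (simp add: mult.assoc)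
    qed
    have I1: "1 \<notin> I" using xR I_def by auto
    obtain M where M: "is_maximal_ideal_of R M" "I \<subseteq> M" using exists_maximal_ideal[OF R I I1] by blast
    have M1: "1 \<notin> M" using maximal_not_1[OF M(1)] .
    have M0: "0 \<in> M" using M(1) unfolding is_maximal_ideal_of_def is_ideal_of_def by auto
    define L where "L = localization_at R M"
    have LV: "is_valuation_ring L" using P M(1) L_def unfolding is_pruefer_def by blast
    have RL: "R \<subseteq> L"
    proof
      fix r assume "r \<in> R"
      then have "r = r / 1 \<and> r \<in> R \<and> 1 \<in> R \<and> 1 \<notin> M" using M1 R by (simp add: subringD)
      then show "r \<in> L" unfolding L_def localization_at_def by blast
    qed
    have "x \<in> L" using valuation_ic[OF LV] h RL unfolding is_integrally_closed_def by blast
    then obtain a s where as: "x = a / s" "a \<in> R" "s \<in> R" "s \<notin> M"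
      unfolding L_def localization_at_def by blast
    have "s \<noteq> 0" using as M0 by auto
    then have "s * x = a" using as by simp
    then have "s \<in> I" using as I_def by auto
    then show False using M as by auto
  qed
qed

lemma key_construct:
  assumes R: "is_subring R" and ic: "is_integrally_closed R" and fin: "finite G" and GR: "G \<inter> R = {}"
  shows "\<exists>S. is_subring S \<and> R \<subseteq> S \<and> G \<inter> S = {} \<and> is_pruefer S \<and> is_semilocal S"
proof -
  define V where "V g = (SOME V. is_valuation_ring V \<and> R \<subseteq> V \<and> g \<notin> V)" for g
  have V: "is_valuation_ring (V g) \<and> R \<subseteq> V g \<and> g \<notin> V g" if "g \<in> G" for g
  proof -
    have "g \<notin> R" using GR that by auto
    then show ?thesis unfolding V_def by (rule someI_ex[OF valuation_exists[OF R ic]])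
  qed
  define \<V> where "\<V> = insert UNIV (V ` G)"
  have UV: "is_valuation_ring (UNIV :: 'a set)" unfolding is_valuation_ring_def is_subring_def by auto
  have val: "\<And>W. W \<in> \<V> \<Longrightarrow> is_valuation_ring W" using V UV \<V>_def by auto
  have "is_pruefer (\<Inter>\<V>) \<and> is_semilocal (\<Inter>\<V>)"
    by (rule finite_inter_valuation) (use fin val \<V>_def in auto)
  moreover have "is_subring (\<Inter>\<V>)" using calculation by (simp add: is_pruefer_def)
  moreover have "R \<subseteq> \<Inter>\<V>" using V \<V>_def by auto
  moreover have "G \<inter> \<Inter>\<V> = {}" using V \<V>_def by auto
  ultimately show ?thesis by blast
qed



abbreviation basic :: "'a::field set \<Rightarrow> 'a set \<Rightarrow> 'a set set" where
  "basic D F \<equiv> {R \<in> overrings D. F \<subseteq> R}"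

lemma zar_topspace: "topspace (zariski_overrings D) = overrings D"
proof -
  have "overrings D \<in> {{R \<in> overrings D. F \<subseteq> R} | F. finite F}"
    by (rule CollectI, rule exI[of _ "{}"]) auto
  then have "overrings D \<subseteq> \<Union>{{R \<in> overrings D. F \<subseteq> R} | F. finite F}" by (rule Union_upper)
  moreover have "\<Union>{{R \<in> overrings D. F \<subseteq> R} | F. finite F} \<subseteq> overrings D" by auto
  ultimately show ?thesis unfolding zariski_overrings_def topology_generated_by_topspace by (rule antisym[rotated])
qed

lemma zar_open_nbhd:
  assumes "openin (zariski_overrings D) U"
  shows "U \<subseteq> overrings D \<and> (\<forall>R\<in>U. \<exists>F. finite F \<and> F \<subseteq> R \<and> basic D F \<subseteq> U)"
proof -
  have "generate_topology_on {{R \<in> overrings D. F \<subseteq> R} | F. finite F} U"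
    using assms unfolding zariski_overrings_def openin_topology_generated_by_iff .
  then show ?thesis
  proof (induction rule: generate_topology_on.induct)
    case Empty then show ?case by simp
  next
    case (Int a b)
    show ?case
    proof (intro conjI ballI)
      have IHa: "\<forall>R\<in>a. \<exists>F. finite F \<and> F \<subseteq> R \<and> basic D F \<subseteq> a" using Int.IH(1) by (rule conjunct2)
      have IHb: "\<forall>R\<in>b. \<exists>F. finite F \<and> F \<subseteq> R \<and> basic D F \<subseteq> b" using Int.IH(2) by (rule conjunct2)
      have "a \<subseteq> overrings D" using Int.IH(1) by (rule conjunct1)
      then show "a \<inter> b \<subseteq> overrings D" by blast
      fix R assume R: "R \<in> a \<inter> b"
      obtain F1 where "finite F1" "F1 \<subseteq> R" "basic D F1 \<subseteq> a"
        using bspec[OF IHa IntD1[OF R]] by (elim exE conjE)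
      moreover obtain F2 where "finite F2" "F2 \<subseteq> R" "basic D F2 \<subseteq> b"
        using bspec[OF IHb IntD2[OF R]] by (elim exE conjE)
      ultimately have "finite F1" "F1 \<subseteq> R" "basic D F1 \<subseteq> a" "finite F2" "F2 \<subseteq> R" "basic D F2 \<subseteq> b"
        by auto
      then show "\<exists>F. finite F \<and> F \<subseteq> R \<and> basic D F \<subseteq> a \<inter> b"
        by (intro exI[of _ "F1 \<union> F2"]) auto
    qed
  next
    case (UN K)
    show ?case
    proof (intro conjI ballI)
      show "\<Union>K \<subseteq> overrings D" using UN.IH by blast
      fix R assume "R \<in> \<Union>K"
      then obtain k where "k \<in> K" "R \<in> k" by blast
      have "\<forall>R\<in>k. \<exists>F. finite F \<and> F \<subseteq> R \<and> basic D F \<subseteq> k" using UN.IH[OF \<open>k \<in> K\<close>] by (rule conjunct2)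
      then obtain F where "finite F" "F \<subseteq> R" "basic D F \<subseteq> k"
        using \<open>R \<in> k\<close> by (elim exE conjE ballE) auto
      then show "\<exists>F. finite F \<and> F \<subseteq> R \<and> basic D F \<subseteq> \<Union>K" using \<open>k \<in> K\<close> by blast
    qed
  next
    case (Basis s)
    then obtain F where F: "finite F" "s = basic D F" by blast
    show ?case using F by (intro conjI ballI exI[of _ F]) auto
  qed
qed

lemma basic_open_compact:
  assumes D: "is_subring D" and F: "finite F"
  shows "openin (zariski_overrings D) (basic D F)" "compactin (zariski_overrings D) (basic D F)"
proof -
  show op: "openin (zariski_overrings D) (basic D F)"
    unfolding zariski_overrings_def using F by (intro topology_generated_by_Basis) blast
  define R0 where "R0 = \<Inter>(basic D F)"
  have UNIVb: "UNIV \<in> basic D F" unfolding overrings_def is_subring_def by auto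
  have R0sub: "is_subring R0" unfolding R0_def
    by (rule inter_subring) (use UNIVb in \<open>auto simp: overrings_def\<close>)
  have R0b: "R0 \<in> basic D F" using R0sub unfolding R0_def overrings_def by auto
  have R0le: "\<And>S. S \<in> basic D F \<Longrightarrow> R0 \<subseteq> S" unfolding R0_def by blast
  show "compactin (zariski_overrings D) (basic D F)"
    unfolding compactin_def
  proof (intro conjI allI impI)
    show "basic D F \<subseteq> topspace (zariski_overrings D)" by (auto simp: zar_topspace)
    fix \<U> assume U: "(\<forall>U\<in>\<U>. openin (zariski_overrings D) U) \<and> basic D F \<subseteq> \<Union>\<U>"
    then obtain U where U1: "U \<in> \<U>" "R0 \<in> U" using R0b by blast
    then obtain F' where F': "finite F'" "F' \<subseteq> R0" "basic D F' \<subseteq> U"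
      using zar_open_nbhd[of D U] U by blast
    have "basic D F \<subseteq> U" using F' R0le by blast
    then show "\<exists>\<F>. finite \<F> \<and> \<F> \<subseteq> \<U> \<and> basic D F \<subseteq> \<Union>\<F>"
      using U1 by (intro exI[of _ "{U}"]) auto
  qed
qed

definition cgens :: "'a::field set \<Rightarrow> 'a set set set" where
  "cgens D = {U. openin (zariski_overrings D) U \<and> compactin (zariski_overrings D) U} \<union>
        {topspace (zariski_overrings D) - U | U.
            openin (zariski_overrings D) U \<and> compactin (zariski_overrings D) U}"

lemma cons_topspace:
  assumes D: "is_subring D"
  shows "topspace (constructible_overrings D) = overrings D"
proof -
  have "\<Union>(cgens D) \<subseteq> overrings D"
    unfolding cgens_def using zar_topspace[of D] by (auto dest: compactin_subset_topspace)
  moreover have "overrings D \<in> cgens D"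
    using basic_open_compact[OF D, of "{}"] unfolding cgens_def by auto
  ultimately show ?thesis
    unfolding constructible_overrings_def cgens_def[symmetric] topology_generated_by_topspace by blast
qed

lemma finite_range_coeff: "finite (range (coeff p))"
proof (rule finite_subset)
  show "range (coeff p) \<subseteq> insert 0 (coeff p ` {..degree p})"
  proof
    fix c assume "c \<in> range (coeff p)"
    then obtain i where i: "c = coeff p i" by blast
    show "c \<in> insert 0 (coeff p ` {..degree p})"
      by (cases "i \<le> degree p") (auto simp: i coeff_eq_0)
  qed
qed auto

lemma ic_closed:
  assumes D: "is_subring D"
  shows "closedin (constructible_overrings D) {R \<in> overrings D. is_integrally_closed R}"
proof -
  let ?X = "constructible_overrings D"
  define C where "C = {R \<in> overrings D. is_integrally_closed R}"
  define W where "W p x = basic D (range (coeff p)) \<inter> (overrings D - basic D {x})" for p :: "'a poly" and x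
  have eq: "overrings D - C = \<Union>{W p x | p x. lead_coeff p = 1 \<and> poly p x = 0}"
  proof (intro equalityI subsetI)
    fix R assume "R \<in> overrings D - C"
    then obtain p x where px: "R \<in> overrings D" "lead_coeff p = 1" "\<forall>i. coeff p i \<in> R" "poly p x = 0" "x \<notin> R"
      unfolding C_def is_integrally_closed_def by blast
    then have "R \<in> W p x" unfolding W_def by auto
    then show "R \<in> \<Union>{W p x | p x. lead_coeff p = 1 \<and> poly p x = 0}" using px by blast
  next
    fix R assume "R \<in> \<Union>{W p x | p x. lead_coeff p = 1 \<and> poly p x = 0}"
    then obtain p x where px: "lead_coeff p = 1" "poly p x = 0" "R \<in> W p x" by blast
    then have "R \<in> overrings D" "\<forall>i. coeff p i \<in> R" "x \<notin> R" unfolding W_def by auto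
    then show "R \<in> overrings D - C" using px unfolding C_def is_integrally_closed_def by blast
  qed
  have "openin ?X (W p x)" for p x
  proof -
    have "basic D (range (coeff p)) \<in> cgens D"
      using basic_open_compact[OF D finite_range_coeff[of p]] unfolding cgens_def by blast
    moreover have "overrings D - basic D {x} \<in> cgens D"
      using basic_open_compact[OF D, of "{x}"] unfolding cgens_def zar_topspace by blast
    ultimately show ?thesis
      unfolding W_def constructible_overrings_def cgens_def[symmetric] openin_topology_generated_by_iff
      by (intro generate_topology_on.Int generate_topology_on.Basis)
  qed
  then have "openin ?X (overrings D - C)" unfolding eq by auto
  then show ?thesis unfolding closedin_def cons_topspace[OF D] C_def by auto
qed

definition nbhd_ok :: "'a::field set \<Rightarrow> 'a set \<Rightarrow> 'a set set \<Rightarrow> bool" where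
  "nbhd_ok D R T \<longleftrightarrow> (\<exists>F G. finite F \<and> finite G \<and> F \<subseteq> R \<and> G \<inter> R = {} \<and>
           {S \<in> overrings D. F \<subseteq> S \<and> G \<inter> S = {}} \<subseteq> T)"

lemma nbhd_ok_mono: "nbhd_ok D R T \<Longrightarrow> T \<subseteq> T' \<Longrightarrow> nbhd_ok D R T'"
  unfolding nbhd_ok_def by (elim exE conjE) (intro exI conjI, assumption+, blast)

lemma nbhd_ok_Int:
  assumes "nbhd_ok D R a" "nbhd_ok D R b"
  shows "nbhd_ok D R (a \<inter> b)"
proof -
  obtain F1 G1 where 1: "finite F1" "finite G1" "F1 \<subseteq> R" "G1 \<inter> R = {}"
    "{S \<in> overrings D. F1 \<subseteq> S \<and> G1 \<inter> S = {}} \<subseteq> a" using assms(1) unfolding nbhd_ok_def by (elim exE conjE)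
  obtain F2 G2 where 2: "finite F2" "finite G2" "F2 \<subseteq> R" "G2 \<inter> R = {}"
    "{S \<in> overrings D. F2 \<subseteq> S \<and> G2 \<inter> S = {}} \<subseteq> b" using assms(2) unfolding nbhd_ok_def by (elim exE conjE)
  have "{S \<in> overrings D. F1 \<union> F2 \<subseteq> S \<and> (G1 \<union> G2) \<inter> S = {}} \<subseteq> a \<inter> b"
    using 1(5) 2(5) by blast
  then show ?thesis unfolding nbhd_ok_def using 1 2
    by (intro exI[of _ "F1 \<union> F2"] exI[of _ "G1 \<union> G2"]) auto
qed

lemma nbhd_ok_complement:
  assumes D: "is_subring D" and R: "R \<in> overrings D" "R \<notin> U"
    and U: "openin (zariski_overrings D) U" "compactin (zariski_overrings D) U"
  shows "nbhd_ok D R (overrings D - U)"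
proof -
  define \<U> where "\<U> = {basic D F | F. finite F \<and> basic D F \<subseteq> U}"
  have op: "\<forall>W\<in>\<U>. openin (zariski_overrings D) W"
  proof
    fix W assume "W \<in> \<U>"
    then obtain F where "W = basic D F" "finite F" unfolding \<U>_def by blast
    then show "openin (zariski_overrings D) W" using basic_open_compact(1)[OF D] by simp
  qed
  have UN: "\<forall>S\<in>U. \<exists>F. finite F \<and> F \<subseteq> S \<and> basic D F \<subseteq> U" using zar_open_nbhd[OF U(1)] by (rule conjunct2)
  have UOV: "U \<subseteq> overrings D" using zar_open_nbhd[OF U(1)] by (rule conjunct1)
  have cov: "U \<subseteq> \<Union>\<U>"
  proof
    fix S assume S: "S \<in> U"
    obtain F where F: "finite F" "F \<subseteq> S" "basic D F \<subseteq> U" using bspec[OF UN S] by (elim exE conjE)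
    have "S \<in> basic D F" using F(2) S UOV by blast
    moreover have "basic D F \<in> \<U>" unfolding \<U>_def using F by blast
    ultimately show "S \<in> \<Union>\<U>" by blast
  qed
  have "\<forall>\<U>. (\<forall>U\<in>\<U>. openin (zariski_overrings D) U) \<and> U \<subseteq> \<Union>\<U>
          \<longrightarrow> (\<exists>\<F>. finite \<F> \<and> \<F> \<subseteq> \<U> \<and> U \<subseteq> \<Union>\<F>)"
    using U(2) unfolding compactin_def by (rule conjunct2)
  then have "\<exists>\<F>. finite \<F> \<and> \<F> \<subseteq> \<U> \<and> U \<subseteq> \<Union>\<F>" using op cov by blast
  then obtain \<V> where V: "finite \<V>" "\<V> \<subseteq> \<U>" "U \<subseteq> \<Union>\<V>" by (elim exE conjE)
  have ex: "\<exists>g. g \<notin> R \<and> (\<forall>S. S \<in> W \<longrightarrow> g \<in> S)" if W: "W \<in> \<V>" for W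
  proof -
    have "W \<in> \<U>" using V(2) W by blast
    then obtain F where F: "W = basic D F" "basic D F \<subseteq> U" unfolding \<U>_def by blast
    have "\<not> F \<subseteq> R"
    proof
      assume "F \<subseteq> R"
      then have "R \<in> basic D F" using R(1) by blast
      then show False using F(2) R(2) by blast
    qed
    then obtain g where g: "g \<in> F" "g \<notin> R" by blast
    have "\<forall>S. S \<in> W \<longrightarrow> g \<in> S" using F(1) g(1) by blast
    then show ?thesis using g(2) by blast
  qed
  define g where "g W = (SOME g. g \<notin> R \<and> (\<forall>S. S \<in> W \<longrightarrow> g \<in> S))" for W
  have g: "g W \<notin> R \<and> (\<forall>S. S \<in> W \<longrightarrow> g W \<in> S)" if "W \<in> \<V>" for W
    unfolding g_def by (rule someI_ex[OF ex[OF that]])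
  have sub: "{S \<in> overrings D. {} \<subseteq> S \<and> g ` \<V> \<inter> S = {}} \<subseteq> overrings D - U"
  proof
    fix S assume S: "S \<in> {S \<in> overrings D. {} \<subseteq> S \<and> g ` \<V> \<inter> S = {}}"
    have "S \<notin> U"
    proof
      assume "S \<in> U"
      then obtain W where W: "W \<in> \<V>" "S \<in> W" using V(3) by blast
      then have "g W \<in> S" using g by blast
      moreover have "g W \<in> g ` \<V>" using W(1) by blast
      ultimately show False using S by blast
    qed
    then show "S \<in> overrings D - U" using S by blast
  qed
  have "g ` \<V> \<inter> R = {}" using g by blast
  then show ?thesis unfolding nbhd_ok_def using V(1) sub
    by (intro exI[of _ "{}"] exI[of _ "g ` \<V>"]) auto
qed

lemma cons_open_nbhd:
  assumes D: "is_subring D" and T: "openin (constructible_overrings D) T"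
  shows "\<forall>R\<in>T. R \<in> overrings D \<longrightarrow> nbhd_ok D R T"
proof -
  have "generate_topology_on (cgens D) T"
    using T unfolding constructible_overrings_def cgens_def[symmetric] openin_topology_generated_by_iff .
  then show ?thesis
  proof (induction rule: generate_topology_on.induct)
    case Empty then show ?case by simp
  next
    case (Int a b)
    show ?case
    proof (intro ballI impI)
      fix R assume R: "R \<in> a \<inter> b" "R \<in> overrings D"
      have "nbhd_ok D R a" using Int.IH(1) R by blast
      moreover have "nbhd_ok D R b" using Int.IH(2) R by blast
      ultimately show "nbhd_ok D R (a \<inter> b)" by (rule nbhd_ok_Int)
    qed
  next
    case (UN K)
    show ?case
    proof (intro ballI impI)
      fix R assume R: "R \<in> \<Union>K" "R \<in> overrings D"
      then obtain k where k: "k \<in> K" "R \<in> k" by blast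
      then have "nbhd_ok D R k" using UN.IH R by blast
      then show "nbhd_ok D R (\<Union>K)" by (rule nbhd_ok_mono) (use k in blast)
    qed
  next
    case (Basis s)
    show ?case
    proof (intro ballI impI)
      fix R assume R: "R \<in> s" "R \<in> overrings D"
      show "nbhd_ok D R s"
      proof (cases "openin (zariski_overrings D) s \<and> compactin (zariski_overrings D) s")
        case True
        then have "\<forall>R\<in>s. \<exists>F. finite F \<and> F \<subseteq> R \<and> basic D F \<subseteq> s"
          using zar_open_nbhd[of D s] by blast
        then obtain F where F: "finite F" "F \<subseteq> R" "basic D F \<subseteq> s"
          using R(1) by (elim exE conjE ballE) auto
        have "{S \<in> overrings D. F \<subseteq> S \<and> {} \<inter> S = {}} \<subseteq> s" using F(3) by blast
        then show ?thesis unfolding nbhd_ok_def using F by (intro exI[of _ F] exI[of _ "{}"]) auto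
      next
        case False
        then have "s \<in> {topspace (zariski_overrings D) - U | U.
            openin (zariski_overrings D) U \<and> compactin (zariski_overrings D) U}"
          using Basis unfolding cgens_def by blast
        then obtain U where U: "s = overrings D - U" "openin (zariski_overrings D) U"
          "compactin (zariski_overrings D) U"
          unfolding zar_topspace by blast
        have "R \<notin> U" using R U(1) by blast
        then show ?thesis using nbhd_ok_complement[OF D R(2) _ U(2,3)] U(1) by simp
      qed
    qed
  qed
qed



theorem proposition6p1:
  fixes D :: "'a::field set"
  assumes "is_subring D" and "is_quotient_field_of D"
  shows "(constructible_overrings D) closure_of
           {R \<in> overrings D. is_pruefer R \<and> is_semilocal R}
         = {R \<in> overrings D. is_integrally_closed R}"
proof (rule equalityI)
  show "constructible_overrings D closure_of {R \<in> overrings D. is_pruefer R \<and> is_semilocal R}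
    \<subseteq> {R \<in> overrings D. is_integrally_closed R}"
    by (rule closure_of_minimal) (use pruefer_ic ic_closed[OF assms(1)] in auto)
next
  show "{R \<in> overrings D. is_integrally_closed R} \<subseteq>
    constructible_overrings D closure_of {R \<in> overrings D. is_pruefer R \<and> is_semilocal R}"
  proof
    fix R assume R: "R \<in> {R \<in> overrings D. is_integrally_closed R}"
    then have ROV: "R \<in> overrings D" and ic: "is_integrally_closed R" by auto
    have RS: "is_subring R" and DR: "D \<subseteq> R" using ROV unfolding overrings_def by auto
    show "R \<in> constructible_overrings D closure_of {R \<in> overrings D. is_pruefer R \<and> is_semilocal R}"
      unfolding in_closure_of
    proof (intro conjI allI impI)
      show "R \<in> topspace (constructible_overrings D)" using cons_topspace[OF assms(1)] ROV by simp
    next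
      fix T assume T: "R \<in> T \<and> openin (constructible_overrings D) T"
      then have "nbhd_ok D R T" using cons_open_nbhd[OF assms(1)] ROV by blast
      then obtain F G where FG: "finite F" "finite G" "F \<subseteq> R" "G \<inter> R = {}"
        "{S \<in> overrings D. F \<subseteq> S \<and> G \<inter> S = {}} \<subseteq> T" unfolding nbhd_ok_def by (elim exE conjE)
      obtain S where S: "is_subring S" "R \<subseteq> S" "G \<inter> S = {}" "is_pruefer S" "is_semilocal S"
        using key_construct[OF RS ic FG(2,4)] by (elim exE conjE)
      have SOV: "S \<in> overrings D" using S DR unfolding overrings_def by auto
      have "S \<in> T" using FG(3,5) S(2,3) SOV by blast
      then show "\<exists>y. y \<in> {R \<in> overrings D. is_pruefer R \<and> is_semilocal R} \<and> y \<in> T"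
        using SOV S by blast
    qed
  qed
qed


end
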